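(* Let $\mathcal A$ be an arrangement of $n$ affine lines in $\mathbb C^2$ whose graph of double points $\Gamma$ is connected, and let $\widetilde{\mathcal A}=c\mathcal A$ be its cone. Then the resonance variety $\mathcal R^1(\widetilde{\mathcal A})$ has no global component.
   Context: The graph of double points $\Gamma$ of $\mathcal A$ has vertex set $\mathcal A$, with an edge $\{\ell_i,\ell_j\}$ iff $\ell_i\cap\ell_j$ is a point lying on no other line of $\mathcal A$. The cone $c\mathcal A=\{\widetilde H_0,\dots,\widetilde H_n\}$ is the central arrangement in $\mathbb C^3$ consisting of $z_0=0$ and the homogenizations of the lines of $\mathcal A$. Let $A^\bullet$ be the Orlik–Solomon algebra of $\widetilde{\mathcal A}$ over $\mathbb C$, with $A^1$ having the standard basis $e_0,\dots,e_n$ corresponding to the hyperplanes. The resonance variety is $\mathcal R^1(\widetilde{\mathcal A})=\{a\in A^1: H^1(A^\bullet,a\wedge\cdot)\ne 0\}$; it is a finite union of linear subspaces (its components). A component is called global if it is not contained in any coordinate hyperplane of $A^1$ (with respect to the basis $e_0,\dots,e_n$). *)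

theory Defs
  imports Complex_Main
begin

(* An affine line arrangement in C^2 with lines indexed by a finite type 'l.
   Line i is given by  L i = (a, b, c)  and is the zero set of a*x + b*y + c. *)

definition line_pts :: "('l \<Rightarrow> complex \<times> complex \<times> complex) \<Rightarrow> 'l \<Rightarrow> (complex \<times> complex) set" where
  "line_pts L i = (case L i of (a, b, c) \<Rightarrow> {(x, y). a * x + b * y + c = 0})"

definition affine_line_arrangement :: "('l \<Rightarrow> complex \<times> complex \<times> complex) \<Rightarrow> bool" where
  "affine_line_arrangement L \<longleftrightarrow>
     (\<forall>i. case L i of (a, b, c) \<Rightarrow> (a, b) \<noteq> (0, 0)) \<and> inj (line_pts L)"

definition double_point_edge :: "('l \<Rightarrow> complex \<times> complex \<times> complex) \<Rightarrow> 'l \<Rightarrow> 'l \<Rightarrow> bool" where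
  "double_point_edge L i j \<longleftrightarrow> i \<noteq> j \<and>
     (\<exists>p. line_pts L i \<inter> line_pts L j = {p} \<and>
          (\<forall>k. k \<noteq> i \<longrightarrow> k \<noteq> j \<longrightarrow> p \<notin> line_pts L k))"

definition double_point_graph_connected :: "('l \<Rightarrow> complex \<times> complex \<times> complex) \<Rightarrow> bool" where
  "double_point_graph_connected L \<longleftrightarrow>
     (\<forall>i j. (i, j) \<in> {(u, v). double_point_edge L u v}\<^sup>*)"

(* Cone: hyperplanes indexed by 'l option; None is H_0 = {z0 = 0}, Some i is the
   homogenization a*x + b*y + c*z0 = 0 of line i. Normal vectors in coordinates (z0, x, y). *)
definition cone_normal :: "('l \<Rightarrow> complex \<times> complex \<times> complex) \<Rightarrow> 'l option \<Rightarrow> complex \<times> complex \<times> complex" where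
  "cone_normal L h = (case h of None \<Rightarrow> (1, 0, 0) | Some i \<Rightarrow> (case L i of (a, b, c) \<Rightarrow> (c, a, b)))"

definition det3 :: "complex \<times> complex \<times> complex \<Rightarrow> complex \<times> complex \<times> complex \<Rightarrow> complex \<times> complex \<times> complex \<Rightarrow> complex" where
  "det3 u v w = (case u of (u1, u2, u3) \<Rightarrow> case v of (v1, v2, v3) \<Rightarrow> case w of (w1, w2, w3) \<Rightarrow>
      u1 * (v2 * w3 - v3 * w2) - u2 * (v1 * w3 - v3 * w1) + u3 * (v1 * w2 - v2 * w1))"

definition dep_triples :: "('l \<Rightarrow> complex \<times> complex \<times> complex) \<Rightarrow> ('l option \<times> 'l option \<times> 'l option) set" where
  "dep_triples L = {(i, j, k). i \<noteq> j \<and> i \<noteq> k \<and> j \<noteq> k \<and>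
       det3 (cone_normal L i) (cone_normal L j) (cone_normal L k) = 0}"

(* A^1 = functions 'h => complex (coordinates w.r.t. e_h).
   Degree-2 part of the exterior algebra E^2 represented by alternating coefficient
   functions; wedge product u \<and> v. *)
definition wedge :: "('h \<Rightarrow> complex) \<Rightarrow> ('h \<Rightarrow> complex) \<Rightarrow> 'h \<Rightarrow> 'h \<Rightarrow> complex" where
  "wedge u v = (\<lambda>p q. u p * v q - u q * v p)"

definition basis_vec :: "'h \<Rightarrow> 'h \<Rightarrow> complex" where
  "basis_vec i = (\<lambda>h. if h = i then 1 else 0)"

definition bdry3 :: "'h \<Rightarrow> 'h \<Rightarrow> 'h \<Rightarrow> 'h \<Rightarrow> 'h \<Rightarrow> complex" where
  "bdry3 i j k = (\<lambda>p q. wedge (basis_vec j) (basis_vec k) p q - wedge (basis_vec i) (basis_vec k) p q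
                        + wedge (basis_vec i) (basis_vec j) p q)"

(* degree-2 part I^2 of the Orlik-Solomon ideal of the cone (distinct hyperplanes, rank 3):
   the span of boundaries of dependent triples *)
definition OS_ideal2 :: "('l \<Rightarrow> complex \<times> complex \<times> complex) \<Rightarrow> ('l option \<Rightarrow> 'l option \<Rightarrow> complex) set" where
  "OS_ideal2 L = {\<omega>. \<exists>c. \<omega> = (\<lambda>p q. \<Sum>t\<in>dep_triples L. c t * (case t of (i, j, k) \<Rightarrow> bdry3 i j k p q))}"

(* H^1(A, a\<and>) = ker(a\<and> : A^1 \<rightarrow> A^2) / im(a\<and> : A^0 \<rightarrow> A^1), A^0 = C, A^2 = E^2 / I^2 *)
definition H1_nonzero :: "('l::finite \<Rightarrow> complex \<times> complex \<times> complex) \<Rightarrow> ('l option \<Rightarrow> complex) \<Rightarrow> bool" where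
  "H1_nonzero L a \<longleftrightarrow>
     (\<exists>b. wedge a b \<in> OS_ideal2 L \<and> (\<forall>z::complex. b \<noteq> (\<lambda>h. z * a h)))"

definition resonance1 :: "('l::finite \<Rightarrow> complex \<times> complex \<times> complex) \<Rightarrow> ('l option \<Rightarrow> complex) set" where
  "resonance1 L = {a. H1_nonzero L a}"

definition csubspace :: "('h \<Rightarrow> complex) set \<Rightarrow> bool" where
  "csubspace V \<longleftrightarrow> (\<lambda>_. 0) \<in> V \<and> (\<forall>u\<in>V. \<forall>v\<in>V. (\<lambda>h. u h + v h) \<in> V) \<and>
                     (\<forall>z::complex. \<forall>u\<in>V. (\<lambda>h. z * u h) \<in> V)"

(* components of R^1 (a finite union of linear subspaces): the maximal linear subspaces in it *)
definition resonance_component :: "('l::finite \<Rightarrow> complex \<times> complex \<times> complex) \<Rightarrow> ('l option \<Rightarrow> complex) set \<Rightarrow> bool" where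
  "resonance_component L V \<longleftrightarrow> csubspace V \<and> V \<subseteq> resonance1 L \<and>
     (\<forall>W. csubspace W \<and> V \<subseteq> W \<and> W \<subseteq> resonance1 L \<longrightarrow> W = V)"

definition global_component :: "('h \<Rightarrow> complex) set \<Rightarrow> bool" where
  "global_component V \<longleftrightarrow> \<not> (\<exists>h. V \<subseteq> {a. a h = 0})"

end

theory Submission imports Defs begin


lemma det3_swap12: "det3 u v w = - det3 v u w"
  by (cases u; cases v; cases w) (simp add: det3_def algebra_simps)
lemma det3_swap23: "det3 u v w = - det3 u w v"
  by (cases u; cases v; cases w) (simp add: det3_def algebra_simps)

lemma lines_eq:
  fixes a1 b1 c1 a2 b2 c2 x y :: complex
  assumes "(a1,b1) \<noteq> (0,0)" "(a2,b2) \<noteq> (0,0)" "a1*b2 = a2*b1"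
    "a1*x + b1*y + c1 = 0" "a2*x + b2*y + c2 = 0"
  shows "{(u,v). a1*u + b1*v + c1 = 0} = {(u,v). a2*u + b2*v + c2 = 0}"
proof -
  have key: "a2*u + b2*v + c2 = 0 \<longleftrightarrow> a1*u + b1*v + c1 = 0" for u v
  proof (cases "a1 = 0")
    case True
    then have "b1 \<noteq> 0" using assms(1) by auto
    have "a2 = 0" using assms(3) True \<open>b1\<noteq>0\<close> by simp
    then have "b2 \<noteq> 0" using assms(2) by auto
    define s where "s = b2/b1"
    have "b2 = s*b1" using \<open>b1\<noteq>0\<close> s_def by simp
    have "c2 = s*c1" using assms(4,5) True \<open>a2=0\<close> \<open>b2 = s*b1\<close>
      by (metis add.left_neutral add_diff_cancel_left' diff_0 mult.assoc mult_zero_left minus_mult_right mult.commute ring_distribs(1))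
    have "s \<noteq> 0" using \<open>b2\<noteq>0\<close> \<open>b2 = s*b1\<close> by auto
    have "a2*u + b2*v + c2 = s*(a1*u + b1*v + c1)"
      using True \<open>a2=0\<close> \<open>b2 = s*b1\<close> \<open>c2 = s*c1\<close> by (simp add: algebra_simps)
    then show ?thesis using \<open>s\<noteq>0\<close> by simp
  next
    case False
    define s where "s = a2/a1"
    have "a2 = s*a1" using False s_def by simp
    have "b2 = s*b1" using assms(3) False \<open>a2 = s*a1\<close>
      by (metis mult.commute mult.left_commute mult_cancel_left)
    have "c2 = s*c1"
    proof -
      have "c2 = -(a2*x + b2*y)" using assms(5) by (metis add.commute add_eq_0_iff2 minus_add_distrib)
      moreover have "c1 = -(a1*x + b1*y)" using assms(4) by (metis add.commute add_eq_0_iff2 minus_add_distrib)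
      ultimately show ?thesis using \<open>a2 = s*a1\<close> \<open>b2 = s*b1\<close> by algebra
    qed
    have "s \<noteq> 0" using assms(2) \<open>a2 = s*a1\<close> \<open>b2 = s*b1\<close> by auto
    have "a2*u + b2*v + c2 = s*(a1*u + b1*v + c1)"
      using \<open>a2 = s*a1\<close> \<open>b2 = s*b1\<close> \<open>c2 = s*c1\<close> by (simp add: algebra_simps)
    then show ?thesis using \<open>s\<noteq>0\<close> by simp
  qed
  show ?thesis using key by auto
qed

lemma lines_meet:
  fixes a1 b1 c1 a2 b2 c2 :: complex
  assumes "a1*b2 - a2*b1 \<noteq> 0"
  shows "\<exists>x y. a1*x + b1*y + c1 = 0 \<and> a2*x + b2*y + c2 = 0"
proof -
  define D where "D = a1*b2 - a2*b1"
  define x where "x = (b1*c2 - b2*c1)/D"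
  define y where "y = (c1*a2 - c2*a1)/D"
  have "D \<noteq> 0" using assms D_def by simp
  have "a1*x + b1*y + c1 = (a1*(b1*c2 - b2*c1) + b1*(c1*a2 - c2*a1) + c1*D)/D"
    using \<open>D\<noteq>0\<close> by (simp add: x_def y_def field_simps)
  also have "\<dots> = 0" by (simp add: D_def algebra_simps)
  finally have 1: "a1*x + b1*y + c1 = 0" .
  have "a2*x + b2*y + c2 = (a2*(b1*c2 - b2*c1) + b2*(c1*a2 - c2*a1) + c2*D)/D"
    using \<open>D\<noteq>0\<close> by (simp add: x_def y_def field_simps)
  also have "\<dots> = 0" by (simp add: D_def algebra_simps)
  finally have 2: "a2*x + b2*y + c2 = 0" .
  show ?thesis using 1 2 by blast
qed

lemma det3_through:
  fixes a1 b1 c1 a2 b2 c2 a3 b3 c3 x y :: complex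
  assumes "a1*x + b1*y + c1 = 0" "a2*x + b2*y + c2 = 0"
  shows "det3 (c1,a1,b1) (c2,a2,b2) (c3,a3,b3) = (a1*b2 - a2*b1) * (a3*x + b3*y + c3)"
using assms unfolding det3_def by simp algebra


lemma det3_rep: "det3 u v u = 0" "det3 u u v = 0" "det3 v u u = 0"
  by (cases u; cases v; simp add: det3_def algebra_simps)+

lemma det3_perm0:
  assumes "det3 u v w = 0"
  shows "det3 v u w = 0" "det3 u w v = 0" "det3 w v u = 0" "det3 v w u = 0" "det3 w u v = 0"
  using assms det3_swap12[of u v w] det3_swap23[of u v w] det3_swap12[of v w u] det3_swap23[of v u w]
    det3_swap12[of u w v] det3_swap23[of w u v] det3_swap12[of w u v] by auto

lemma third:
  assumes "x \<noteq> y" "x \<noteq> z" "y \<noteq> z" "det3 (f x) (f y) (f z) = 0"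
    "p \<in> {x,y,z}" "q \<in> {x,y,z}" "p \<noteq> q"
  shows "\<exists>r\<in>{x,y,z}. r \<noteq> p \<and> r \<noteq> q \<and> det3 (f p) (f q) (f r) = 0 \<and> {x,y,z} = {p,q,r}"
  using assms det3_perm0[OF assms(4)] by auto

lemma bdry_nz:
  assumes "bdry3 x y z p q \<noteq> 0"
  shows "p \<in> {x,y,z} \<and> q \<in> {x,y,z} \<and> p \<noteq> q"
  using assms by (auto simp: bdry3_def wedge_def basis_vec_def split: if_splits)

lemma rowsum:
  assumes "x \<noteq> y" "x \<noteq> z" "y \<noteq> z"
  shows "(\<Sum>q\<in>{x,y,z}. bdry3 x y z p q) = 0"
  using assms by (auto simp: bdry3_def wedge_def basis_vec_def)

definition la where "la L i = fst (L i)"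
definition lb where "lb L i = fst (snd (L i))"
definition lc where "lc L i = snd (snd (L i))"

lemma lp: "line_pts L i = {(u,v). la L i*u + lb L i*v + lc L i = 0}"
  by (simp add: line_pts_def la_def lb_def lc_def split: prod.split)
lemma cnS: "cone_normal L (Some i) = (lc L i, la L i, lb L i)"
  by (simp add: cone_normal_def la_def lb_def lc_def split: prod.split)
lemma cnN: "cone_normal L None = (1,0,0)"
  by (simp add: cone_normal_def)
lemma nz: "affine_line_arrangement L \<Longrightarrow> (la L i, lb L i) \<noteq> (0,0)"
  by (auto simp: affine_line_arrangement_def la_def lb_def split: prod.splits) (metis prod.collapse)+

lemma par_common_eq:
  assumes arr: "affine_line_arrangement L" and par: "la L i * lb L j = la L j * lb L i"
    and p: "p \<in> line_pts L i" "p \<in> line_pts L j"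
  shows "i = j"
proof -
  obtain x y where "p = (x,y)" by (cases p)
  have "line_pts L i = line_pts L j"
    unfolding lp apply (rule lines_eq[OF nz[OF arr] nz[OF arr] par])
    using p \<open>p = (x,y)\<close> by (auto simp: lp)
  then show ?thesis using arr by (auto simp: affine_line_arrangement_def inj_def)
qed

lemma detN: "det3 (cone_normal L None) (cone_normal L (Some i)) (cone_normal L (Some k))
   = la L i * lb L k - lb L i * la L k"
  by (simp add: cnN cnS det3_def)

lemma detijN: "det3 (cone_normal L (Some i)) (cone_normal L (Some j)) (cone_normal L None)
   = la L i * lb L j - la L j * lb L i"
  by (simp add: cnN cnS det3_def algebra_simps)

lemma edge_det:
  assumes arr: "affine_line_arrangement L" and e: "double_point_edge L i j"
    and r: "r \<noteq> Some i" "r \<noteq> Some j"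
  shows "det3 (cone_normal L (Some i)) (cone_normal L (Some j)) (cone_normal L r) \<noteq> 0"
proof -
  from e obtain p where ij: "i \<noteq> j" and p: "line_pts L i \<inter> line_pts L j = {p}"
    and no: "\<forall>k. k \<noteq> i \<longrightarrow> k \<noteq> j \<longrightarrow> p \<notin> line_pts L k"
    unfolding double_point_edge_def by blast
  have pi: "p \<in> line_pts L i" and pj: "p \<in> line_pts L j" using p by auto
  have D: "la L i * lb L j - la L j * lb L i \<noteq> 0"
    using par_common_eq[OF arr _ pi pj] ij by auto
  obtain x y where pxy: "p = (x,y)" by (cases p)
  show ?thesis
  proof (cases r)
    case None then show ?thesis using D by (simp add: detijN)
  next
    case (Some k)
    have "k \<noteq> i" "k \<noteq> j" using r Some by auto
    then have "p \<notin> line_pts L k" using no by auto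
    then have nk: "la L k * x + lb L k * y + lc L k \<noteq> 0" using pxy by (auto simp: lp)
    have ei: "la L i * x + lb L i * y + lc L i = 0" using pi pxy by (auto simp: lp)
    have ej: "la L j * x + lb L j * y + lc L j = 0" using pj pxy by (auto simp: lp)
    show ?thesis using det3_through[OF ei ej, of "lc L k" "la L k" "lb L k"] D nk Some
      by (simp add: cnS)
  qed
qed

lemma lemB:
  assumes arr: "affine_line_arrangement L" and ij: "i \<noteq> j"
    and par: "la L i * lb L j - lb L i * la L j = 0"
    and d: "det3 (cone_normal L (Some i)) (cone_normal L (Some j)) (cone_normal L (Some k)) = 0"
  shows "la L i * lb L k - lb L i * la L k = 0"
proof (rule ccontr)
  assume "la L i * lb L k - lb L i * la L k \<noteq> 0"
  then have D: "la L i * lb L k - la L k * lb L i \<noteq> 0" by (simp add: algebra_simps)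
  obtain x y where ei: "la L i * x + lb L i * y + lc L i = 0" and ek: "la L k * x + lb L k * y + lc L k = 0"
    using lines_meet[OF D] by blast
  have "det3 (cone_normal L (Some i)) (cone_normal L (Some k)) (cone_normal L (Some j)) = 0"
    using det3_perm0(2)[OF d] .
  then have "la L j * x + lb L j * y + lc L j = 0"
    using det3_through[OF ei ek, of "lc L j" "la L j" "lb L j"] D by (simp add: cnS)
  then have "(x,y) \<in> line_pts L j" "(x,y) \<in> line_pts L i" using ei by (auto simp: lp)
  moreover have "la L i * lb L j = la L j * lb L i" using par by (simp add: algebra_simps)
  ultimately show False using par_common_eq[OF arr] ij by blast
qed


lemma OS_sum:
  assumes "\<omega> \<in> OS_ideal2 L"
  obtains c where "\<omega> = (\<lambda>p q. \<Sum>t\<in>dep_triples L. c t * (case t of (i, j, k) \<Rightarrow> bdry3 i j k p q))"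
  using assms unfolding OS_ideal2_def by blast

lemma factE:
  assumes arr: "affine_line_arrangement L" and e: "double_point_edge L i j"
    and w: "\<omega> \<in> OS_ideal2 L"
  shows "\<omega> (Some i) (Some j) = 0"
proof -
  obtain c where c: "\<omega> = (\<lambda>p q. \<Sum>t\<in>dep_triples L. c t * (case t of (i, j, k) \<Rightarrow> bdry3 i j k p q))"
    using OS_sum[OF w] by blast
  have ij: "i \<noteq> j" using e by (simp add: double_point_edge_def)
  have "(case t of (x, y, z) \<Rightarrow> bdry3 x y z (Some i) (Some j)) = 0" if t: "t \<in> dep_triples L" for t
  proof -
    obtain x y z where t': "t = (x,y,z)" by (cases t)
    have dist: "x \<noteq> y" "x \<noteq> z" "y \<noteq> z" and d: "det3 (cone_normal L x) (cone_normal L y) (cone_normal L z) = 0"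
      using t t' by (auto simp: dep_triples_def)
    show ?thesis
    proof (rule ccontr)
      assume "(case t of (x, y, z) \<Rightarrow> bdry3 x y z (Some i) (Some j)) \<noteq> 0"
      then have "bdry3 x y z (Some i) (Some j) \<noteq> 0" using t' by simp
      from bdry_nz[OF this] obtain r where "r \<in> {x,y,z}" "r \<noteq> Some i" "r \<noteq> Some j"
        "det3 (cone_normal L (Some i)) (cone_normal L (Some j)) (cone_normal L r) = 0"
        using third[OF dist, of "cone_normal L", OF d] by blast
      then show False using edge_det[OF arr e] by blast
    qed
  qed
  then show ?thesis unfolding c by simp
qed

definition Sset where "Sset L i = {h. det3 (cone_normal L None) (cone_normal L (Some i)) (cone_normal L h) = 0}"

lemma lemG:
  assumes arr: "affine_line_arrangement L" and h: "h \<noteq> Some i" "h \<in> Sset L i"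
    and r: "r \<noteq> h" "r \<noteq> Some i"
    and d: "det3 (cone_normal L (Some i)) (cone_normal L h) (cone_normal L r) = 0"
  shows "r \<in> Sset L i"
proof (cases h)
  case None
  then obtain k where k: "r = Some k" using r by (cases r) auto
  show ?thesis using det3_perm0(1)[OF d] None k by (simp add: Sset_def)
next
  case (Some j)
  have ij: "i \<noteq> j" using h Some by auto
  show ?thesis
  proof (cases r)
    case None then show ?thesis by (simp add: Sset_def det3_rep)
  next
    case (Some k)
    have par: "la L i * lb L j - lb L i * la L j = 0" using h \<open>h = Some j\<close> by (simp add: Sset_def detN)
    show ?thesis using lemB[OF arr ij par] d \<open>h = Some j\<close> Some by (simp add: Sset_def detN)
  qed
qed

lemma factF:
  fixes L :: "'l::finite \<Rightarrow> complex \<times> complex \<times> complex"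
  assumes arr: "affine_line_arrangement L" and w: "\<omega> \<in> OS_ideal2 L"
  shows "(\<Sum>q\<in>Sset L i. \<omega> (Some i) q) = 0"
proof -
  obtain c where c: "\<omega> = (\<lambda>p q. \<Sum>t\<in>dep_triples L. c t * (case t of (i, j, k) \<Rightarrow> bdry3 i j k p q))"
    using OS_sum[OF w] by blast
  have "(\<Sum>q\<in>Sset L i. (case t of (x, y, z) \<Rightarrow> bdry3 x y z (Some i) q)) = 0"
    if t: "t \<in> dep_triples L" for t
  proof -
    obtain x y z where t': "t = (x,y,z)" by (cases t)
    have dist: "x \<noteq> y" "x \<noteq> z" "y \<noteq> z" and d: "det3 (cone_normal L x) (cone_normal L y) (cone_normal L z) = 0"
      using t t' by (auto simp: dep_triples_def)
    show ?thesis
    proof (cases "{x,y,z} \<subseteq> Sset L i")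
      case True
      have "(\<Sum>q\<in>Sset L i. bdry3 x y z (Some i) q) = (\<Sum>q\<in>{x,y,z}. bdry3 x y z (Some i) q)"
        apply (rule sum.mono_neutral_right)
        using True by (auto dest!: bdry_nz)
      then show ?thesis using rowsum[OF dist] t' by simp
    next
      case False
      have "bdry3 x y z (Some i) q = 0" if q: "q \<in> Sset L i" for q
      proof (rule ccontr)
        assume "bdry3 x y z (Some i) q \<noteq> 0"
        from bdry_nz[OF this] obtain r where r: "r \<in> {x,y,z}" "r \<noteq> Some i" "r \<noteq> q"
          "det3 (cone_normal L (Some i)) (cone_normal L q) (cone_normal L r) = 0"
          "{x,y,z} = {Some i, q, r}"
          using third[OF dist, of "cone_normal L", OF d] by blast
        have "Some i \<noteq> q" using bdry_nz[OF \<open>bdry3 x y z (Some i) q \<noteq> 0\<close>] by simp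
        have "r \<in> Sset L i" using lemG[OF arr _ q] r \<open>Some i \<noteq> q\<close> by auto
        moreover have "Some i \<in> Sset L i" by (simp add: Sset_def det3_rep)
        ultimately show False using False r q by auto
      qed
      then show ?thesis using t' by simp
    qed
  qed
  then have z: "\<And>t. t \<in> dep_triples L \<Longrightarrow> c t * (\<Sum>q\<in>Sset L i. (case t of (x, y, z) \<Rightarrow> bdry3 x y z (Some i) q)) = 0"
    by simp
  have "(\<Sum>q\<in>Sset L i. \<omega> (Some i) q) = (\<Sum>t\<in>dep_triples L. c t * (\<Sum>q\<in>Sset L i. (case t of (x, y, z) \<Rightarrow> bdry3 x y z (Some i) q)))"
    unfolding c by (simp add: sum.swap[of _ "Sset L i"] sum_distrib_left)
  also have "\<dots> = 0" using z by (intro sum.neutral) blast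
  finally show ?thesis .
qed


lemma full_support:
  fixes V :: "('h \<Rightarrow> complex) set"
  assumes sub: "csubspace V" and gl: "\<And>h. \<exists>u\<in>V. u h \<noteq> 0" and fin: "finite F"
  shows "\<exists>u\<in>V. \<forall>h\<in>F. u h \<noteq> 0"
  using fin
proof (induction F rule: finite_induct)
  case empty
  then show ?case using sub by (auto simp: csubspace_def)
next
  case (insert h F)
  obtain u where u: "u \<in> V" "\<forall>k\<in>F. u k \<noteq> 0" using insert.IH by blast
  obtain v where v: "v \<in> V" "v h \<noteq> 0" using gl by blast
  have "finite ((\<lambda>k. - u k / v k) ` insert h F)" using insert.hyps by simp
  then obtain z where z: "z \<notin> (\<lambda>k. - u k / v k) ` insert h F"
    using ex_new_if_finite[OF infinite_UNIV_char_0] by blast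
  define w where "w = (\<lambda>k. u k + z * v k)"
  have "(\<lambda>k. z * v k) \<in> V" using sub v(1) unfolding csubspace_def by blast
  then have "w \<in> V" using sub u(1) unfolding w_def csubspace_def by fastforce
  moreover have "w k \<noteq> 0" if k: "k \<in> insert h F" for k
  proof
    assume w0: "w k = 0"
    show False
    proof (cases "v k = 0")
      case True
      then have "k \<in> F" using k v by auto
      then show False using u w0 True by (simp add: w_def)
    next
      case False
      have "z = - u k / v k" using w0 False by (simp add: w_def field_simps add_eq_0_iff)
      then show False using z k by auto
    qed
  qed
  ultimately show ?case by blast
qed

theorem corollary3p2:
  fixes L :: "'l::finite \<Rightarrow> complex \<times> complex \<times> complex"
  assumes "affine_line_arrangement L"
    and "double_point_graph_connected L"
  shows "\<not> (\<exists>V. resonance_component L V \<and> global_component V)"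
proof
  note arr = assms(1)
  assume "\<exists>V. resonance_component L V \<and> global_component V"
  then obtain V where comp: "resonance_component L V" and gl: "global_component V" by blast
  have sub: "csubspace V" and res: "V \<subseteq> resonance1 L" using comp by (auto simp: resonance_component_def)
  have gl': "\<exists>u\<in>V. u h \<noteq> 0" for h using gl unfolding global_component_def by auto
  obtain a where aV: "a \<in> V" and anz: "\<forall>h. a h \<noteq> 0"
    using full_support[OF sub gl', of UNIV] by auto
  obtain b where w: "wedge a b \<in> OS_ideal2 L" and nb: "\<forall>z. b \<noteq> (\<lambda>h. z * a h)"
    using res aV by (auto simp: resonance1_def H1_nonzero_def)
  define i0 where "i0 = (undefined :: 'l)"
  define lam where "lam = b (Some i0) / a (Some i0)"
  have bj: "b (Some j) = lam * a (Some j)" for j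
  proof -
    have "(i0, j) \<in> {(u, v). double_point_edge L u v}\<^sup>*"
      using assms(2) by (simp add: double_point_graph_connected_def)
    then show ?thesis
    proof (induction rule: rtrancl_induct)
      case base
      then show ?case using anz by (simp add: lam_def)
    next
      case (step y z)
      have e: "double_point_edge L y z" using step.hyps(2) by simp
      have "wedge a b (Some y) (Some z) = 0" using factE[OF arr e w] .
      then have "a (Some y) * b (Some z) = a (Some z) * b (Some y)" by (simp add: wedge_def)
      then have "a (Some y) * b (Some z) = a (Some y) * (lam * a (Some z))"
        using step.IH by (simp add: algebra_simps)
      then show ?case using anz by simp
    qed
  qed
  define mu where "mu = b None - lam * a None"
  have wv: "wedge a b (Some i0) q = (if q = None then a (Some i0) * mu else 0)" for q
    by (cases q) (simp_all add: wedge_def bj mu_def algebra_simps)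
  have "None \<in> Sset L i0" by (simp add: Sset_def det3_rep)
  then have "(\<Sum>q\<in>Sset L i0. wedge a b (Some i0) q) = a (Some i0) * mu"
    by (simp add: wv)
  then have "a (Some i0) * mu = 0" using factF[OF arr w] by simp
  then have "mu = 0" using anz by simp
  then have "b = (\<lambda>h. lam * a h)"
    by (intro ext, case_tac h) (simp_all add: bj mu_def)
  then show False using nb by blast
qed

end
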